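(* Let $L=(L_1,\dots,L_N)$ be a contraction path (in the sense of the context), let $\{\phi_{P,q}\}$ be a family of nondecreasing maps $\mathbb{R}_{\ge 0}\to\mathbb{R}_{\ge 0}$ and $\oplus$ an operation as in the context, and let $f$ be the associated tree-separable cost function. Then the procedure $\mathrm{ORDER}(L)$ defined in the context returns a pair $(A,B)$ such that: (i) $A$ is a loop order for $L$ with $f(L,A)=\min_{A'} f(L,A')$, the minimum taken over all loop orders $A'$ for $L$; (ii) $B$ minimizes $f(L,B')$ over all loop orders $B'$ for $L$ whose root differs from the root of $A$ (and $B=\bot$, with cost $+\infty$, if no such loop order exists).
   Context: Indices are abstract symbols. A term is a triple $(K_1,K_2,K_3)$ of finite sets of indices (indices of the two operands and of the output of a pairwise contraction); its index set is $U(K_1,K_2,K_3)=K_1\cup K_2\cup K_3$. A contraction path is a finite sequence $L=(L_1,\dots,L_N)$ of terms with nonempty index sets ($N=0$ allowed). For a term $t$ and index $q$, $t\setminus q$ denotes the term obtained by deleting $q$ from each of its three sets. A loop order for $L$ is a tuple $A=(A_1,\dots,A_N)$ where each $A_i$ is a sequence listing every element of $U(L_i)$ exactly once. For $N\ge1$, the root of $A$ is $q=A_1[1]$. Peeling $A$: let $r$ be the largest integer with $A_1[1]=\dots=A_r[1]=q$. Then $L^{(1)}$ is the sequence $(L_1\setminus q,\dots,L_r\setminus q)$ with terms having empty index set deleted, and $A^{(1)}$ is the corresponding loop order for $L^{(1)}$ consisting of the sequences $A_i[2:]$ ($A_i$ with its first element removed) for those $i\le r$ with $|A_i|\ge2$;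 also $L^{(2)}=(L_{r+1},\dots,L_N)$ and $A^{(2)}=(A_{r+1},\dots,A_N)$. Cost function: let $\oplus$ be an associative binary operation on $\mathbb{R}_{\ge0}$ (extended to $+\infty$ in the obvious monotone way) that is nondecreasing in each argument and has $0$ as identity (e.g. $+$ or $\max$). For every contraction path $P$ and index $q$ let $\phi_{P,q}:\mathbb{R}_{\ge0}\to\mathbb{R}_{\ge0}$ be nondecreasing. The tree-separable cost $f$ is defined recursively by $f(L,A)=0$ if $N=0$, and otherwise $f(L,A)=\phi_{(L_1,\dots,L_r),q}\big(f(L^{(1)},A^{(1)})\big)\oplus f(L^{(2)},A^{(2)})$, with $q,r,L^{(i)},A^{(i)}$ from peeling. (Thus $\phi$ is applied at each loop of the fully fused loop-nest forest obtained by fusing common leading indices of consecutive terms, and costs of sibling subtrees are combined by $\oplus$.) Procedure $\mathrm{ORDER}(L)$: if $N=0$, return $(\emptyset,\bot)$ where $\emptyset$ is the empty loop order (cost $0$) and $\bot$ means "no order" (cost $+\infty$). Otherwise, for each $q\in U(L_1)$, let $k$ be the largest integer with $q\in U(L_i)$ for all $i\le k$; for each $s=1,\dots,k$: let $X$ be $(L_1\setminus q,\dots,L_s\setminus q)$ with empty-index-set terms deleted, and $Y=(L_{s+1},\dots,L_N)$; compute $(A^X,\cdot)=\mathrm{ORDER}(X)$ and $(\bar A^Y,\bar B^Y)=\mathrm{ORDER}(Y)$; set $A^Y=\bar B^Y$ if $Y$ is nonempty and the root of $\bar A^Y$ is $q$, and $A^Y=\bar A^Y$ otherwise. The candidate order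 $C_{q,s}$ has, for $i\le s$, $i$-th sequence equal to $q$ followed by the sequence for $L_i\setminus q$ in $A^X$ (just $(q)$ if that term was deleted), followed by the sequences of $A^Y$; its value is $\delta_{q,s}=\phi_{(L_1,\dots,L_s),q}\big(f(X,A^X)\big)\oplus f(Y,A^Y)$ (taken as $+\infty$ if $A^Y=\bot$). For each $q$ let $C_q$ be a candidate $C_{q,s}$ of minimal $\delta_{q,s}$. Return $A=C_{q^*}$ for a $q^*$ minimizing this value, and $B=C_{q'}$ for $q'\neq q^*$ minimizing this value among the remaining $q$ (or $\bot$ if $U(L_1)=\{q^*\}$). *)

theory Defs
  imports Complex_Main "HOL-Library.Extended_Nonnegative_Real"
begin

type_synonym 'i cterm = "'i set \<times> 'i set \<times> 'i set"

definition U :: "'i cterm \<Rightarrow> 'i set" where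
  "U t = (case t of (K1, K2, K3) \<Rightarrow> K1 \<union> K2 \<union> K3)"

definition del :: "'i cterm \<Rightarrow> 'i \<Rightarrow> 'i cterm" where
  "del t q = (case t of (K1, K2, K3) \<Rightarrow> (K1 - {q}, K2 - {q}, K3 - {q}))"

definition is_path :: "'i cterm list \<Rightarrow> bool" where
  "is_path L \<longleftrightarrow> (\<forall>t\<in>set L. finite (fst t) \<and> finite (fst (snd t)) \<and> finite (snd (snd t))
                      \<and> U t \<noteq> {})"

definition is_loop_order :: "'i cterm list \<Rightarrow> 'i list list \<Rightarrow> bool" where
  "is_loop_order L A \<longleftrightarrow> length A = length L \<and>
     (\<forall>i<length L. distinct (A ! i) \<and> set (A ! i) = U (L ! i))"

definition root :: "'i list list \<Rightarrow> 'i" where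
  "root A = hd (hd A)"

function tcost :: "('i cterm list \<Rightarrow> 'i \<Rightarrow> real \<Rightarrow> real) \<Rightarrow> (real \<Rightarrow> real \<Rightarrow> real)
    \<Rightarrow> 'i cterm list \<Rightarrow> 'i list list \<Rightarrow> real" where
  "tcost phi opl L [] = 0"
| "tcost phi opl L (a # As) =
    (let q = hd a;
         r = length (takeWhile (\<lambda>b. hd b = q) (a # As))
     in opl (phi (take r L) q
               (tcost phi opl (filter (\<lambda>t. U t \<noteq> {}) (map (\<lambda>t. del t q) (take r L)))
                              (filter (\<lambda>b. b \<noteq> []) (map tl (take r (a # As))))))
            (tcost phi opl (drop r L) (drop r (a # As))))"
  by pat_completeness auto
termination
proof (relation "measure (\<lambda>(phi, opl, L, A). sum_list (map length A) + length A)")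
  show "wf (measure (\<lambda>(phi, opl, L, A). sum_list (map length A) + length A))" by simp
next
  fix phi :: "'i cterm list \<Rightarrow> 'i \<Rightarrow> real \<Rightarrow> real" and opl and L and a :: "'i list" and As x xa
  assume x: "x = hd a" and xa: "xa = length (takeWhile (\<lambda>b. hd b = x) (a # As))"
  have r1: "xa \<ge> 1" using x xa by simp
  define T where "T = take xa (a # As)"
  have len: "\<And>M :: 'i list list. sum_list (map length (filter (\<lambda>b. b \<noteq> []) (map tl M)))
        + length (filter (\<lambda>b. b \<noteq> []) (map tl M)) \<le> sum_list (map length M)"
  proof -
    fix M :: "'i list list"
    show "sum_list (map length (filter (\<lambda>b. b \<noteq> []) (map tl M)))
        + length (filter (\<lambda>b. b \<noteq> []) (map tl M)) \<le> sum_list (map length M)"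
      proof (induction M)
      case (Cons a M)
      then show ?case by (cases a) auto
    qed simp
  qed
  have "sum_list (map length T) + 0 < sum_list (map length (a # As)) + length (a # As)"
  proof -
    have "sum_list (map length T) \<le> sum_list (map length (a # As))"
      unfolding T_def
      by (metis append_take_drop_id le_add1 map_append sum_list_append)
    then show ?thesis by simp
  qed
  then show "((phi, opl, filter (\<lambda>t. U t \<noteq> {}) (map (\<lambda>t. del t x) (take xa L)),
              filter (\<lambda>b. b \<noteq> []) (map tl (take xa (a # As)))), phi, opl, L, a # As)
         \<in> measure (\<lambda>(phi, opl, L, A). sum_list (map length A) + length A)"
    using len[of T] unfolding T_def by simp
next
  fix phi :: "'i cterm list \<Rightarrow> 'i \<Rightarrow> real \<Rightarrow> real" and opl and L and a :: "'i list" and As x xa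
  assume x: "x = hd a" and xa: "xa = length (takeWhile (\<lambda>b. hd b = x) (a # As))"
  have r1: "xa \<ge> 1" using x xa by simp
  have "sum_list (map length (drop xa (a # As))) \<le> sum_list (map length (a # As))"
    by (metis append_take_drop_id le_add2 map_append sum_list_append)
  moreover have "length (drop xa (a # As)) < length (a # As)" using r1 by simp
  ultimately show "((phi, opl, drop xa L, drop xa (a # As)), phi, opl, L, a # As)
         \<in> measure (\<lambda>(phi, opl, L, A). sum_list (map length A) + length A)" by simp
qed

section \<open>The procedure ORDER, as a relation describing all its possible outputs
  (arbitrary tie-breaking among minimizers). None encodes \<bottom>.\<close>

definition kof :: "'i cterm list \<Rightarrow> 'i \<Rightarrow> nat" where
  "kof L q = length (takeWhile (\<lambda>t. q \<in> U t) L)"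

definition Xof :: "'i cterm list \<Rightarrow> 'i \<Rightarrow> nat \<Rightarrow> 'i cterm list" where
  "Xof L q s = filter (\<lambda>t. U t \<noteq> {}) (map (\<lambda>t. del t q) (take s L))"

definition Yof :: "'i cterm list \<Rightarrow> nat \<Rightarrow> 'i cterm list" where
  "Yof L s = drop s L"

text \<open>A^Y: the second-best order of Y if Y is nonempty and the best one has root q.\<close>
definition adjY :: "'i \<Rightarrow> 'i cterm list \<Rightarrow> 'i list list \<Rightarrow> 'i list list option
    \<Rightarrow> 'i list list option" where
  "adjY q Y AbarY BbarY = (if Y \<noteq> [] \<and> root AbarY = q then BbarY else Some AbarY)"

text \<open>Re-insert empty sequences for the terms that were deleted from X.\<close>
fun reinsert :: "'i cterm list \<Rightarrow> 'i list list \<Rightarrow> 'i list list" where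
  "reinsert [] As = []"
| "reinsert (t # ts) As =
     (if U t = {} then [] # reinsert ts As else hd As # reinsert ts (tl As))"

definition cand :: "'i cterm list \<Rightarrow> 'i \<Rightarrow> nat \<Rightarrow> 'i list list \<Rightarrow> 'i list list option
    \<Rightarrow> 'i list list option" where
  "cand L q s AX AY =
     map_option (\<lambda>ay. map (Cons q) (reinsert (map (\<lambda>t. del t q) (take s L)) AX) @ ay) AY"

definition dval :: "('i cterm list \<Rightarrow> 'i \<Rightarrow> real \<Rightarrow> real) \<Rightarrow> (real \<Rightarrow> real \<Rightarrow> real)
    \<Rightarrow> 'i cterm list \<Rightarrow> 'i \<Rightarrow> nat \<Rightarrow> 'i list list \<Rightarrow> 'i list list option \<Rightarrow> ennreal" where
  "dval phi opl L q s AX AY =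
     (case AY of None \<Rightarrow> \<infinity>
      | Some ay \<Rightarrow> ennreal (opl (phi (take s L) q (tcost phi opl (Xof L q s) AX))
                                (tcost phi opl (Yof L s) ay)))"

inductive ORDER :: "('i cterm list \<Rightarrow> 'i \<Rightarrow> real \<Rightarrow> real) \<Rightarrow> (real \<Rightarrow> real \<Rightarrow> real)
    \<Rightarrow> 'i cterm list \<Rightarrow> 'i list list \<Rightarrow> 'i list list option \<Rightarrow> bool"
  for phi opl where
  ORDER_Nil: "ORDER phi opl [] [] None"
| ORDER_Cons:
  "\<lbrakk> L = t # Ls;
     \<comment> \<open>recursive calls for every q in U(L_1) and every s in 1..k\<close>
     \<forall>q s. q \<in> U t \<and> 1 \<le> s \<and> s \<le> kof L q \<longrightarrow>
        ORDER phi opl (Xof L q s) (AX q s) (BX q s) \<and>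
        ORDER phi opl (Yof L s) (AbY q s) (BbY q s);
     \<comment> \<open>C_q: a candidate C_{q,s} of minimal delta\<close>
     \<forall>q\<in>U t. 1 \<le> sq q \<and> sq q \<le> kof L q \<and>
        (\<forall>s. 1 \<le> s \<and> s \<le> kof L q \<longrightarrow>
           dval phi opl L q (sq q) (AX q (sq q)) (adjY q (Yof L (sq q)) (AbY q (sq q)) (BbY q (sq q)))
           \<le> dval phi opl L q s (AX q s) (adjY q (Yof L s) (AbY q s) (BbY q s)));
     \<comment> \<open>q*: minimizing value of C_q\<close>
     qs \<in> U t;
     \<forall>q\<in>U t.
        dval phi opl L qs (sq qs) (AX qs (sq qs)) (adjY qs (Yof L (sq qs)) (AbY qs (sq qs)) (BbY qs (sq qs)))
        \<le> dval phi opl L q (sq q) (AX q (sq q)) (adjY q (Yof L (sq q)) (AbY q (sq q)) (BbY q (sq q)));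
     cand L qs (sq qs) (AX qs (sq qs)) (adjY qs (Yof L (sq qs)) (AbY qs (sq qs)) (BbY qs (sq qs)))
       = Some A;
     \<comment> \<open>B = C_{q'} for a minimizing q' \<noteq> q*, or \<bottom> if U(L_1) = {q*}\<close>
     (U t = {qs} \<and> B = None) \<or>
     (\<exists>q'. q' \<in> U t \<and> q' \<noteq> qs \<and>
        (\<forall>q\<in>U t - {qs}.
          dval phi opl L q' (sq q') (AX q' (sq q')) (adjY q' (Yof L (sq q')) (AbY q' (sq q')) (BbY q' (sq q')))
          \<le> dval phi opl L q (sq q) (AX q (sq q)) (adjY q (Yof L (sq q)) (AbY q (sq q)) (BbY q (sq q)))) \<and>
        B = cand L q' (sq q') (AX q' (sq q')) (adjY q' (Yof L (sq q')) (AbY q' (sq q')) (BbY q' (sq q'))))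
   \<rbrakk> \<Longrightarrow> ORDER phi opl L A B"

end

theory Submission
  imports Defs
begin


definition R :: "'i cterm \<Rightarrow> 'i list \<Rightarrow> bool" where
  "R t b \<longleftrightarrow> distinct b \<and> set b = U t"

lemma lo_iff: "is_loop_order L A \<longleftrightarrow> list_all2 R L A"
  unfolding is_loop_order_def list_all2_conv_all_nth R_def by auto

lemma U_del: "U (del t q) = U t - {q}"
  unfolding U_def del_def by (cases t) auto

lemma R_Nil: "R t b \<Longrightarrow> (b = [] \<longleftrightarrow> U t = {})"
  unfolding R_def by auto

lemma filter_R:
  "list_all2 R xs ys \<Longrightarrow> list_all2 R (filter (\<lambda>t. U t \<noteq> {}) xs) (filter (\<lambda>b. b \<noteq> []) ys)"
  by (induction rule: list_all2_induct) (auto dest: R_Nil)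

lemma reinsert_R:
  "list_all2 R (filter (\<lambda>t. U t \<noteq> {}) M) AX \<Longrightarrow>
   list_all2 R M (reinsert M AX) \<and> filter (\<lambda>b. b \<noteq> []) (reinsert M AX) = AX"
proof (induction M arbitrary: AX)
  case Nil then show ?case by simp
next
  case (Cons t M)
  show ?case
  proof (cases "U t = {}")
    case True
    then show ?thesis using Cons by (simp add: R_def)
  next
    case False
    then obtain b AX' where AX: "AX = b # AX'" "R t b" "list_all2 R (filter (\<lambda>t. U t \<noteq> {}) M) AX'"
      using Cons.prems by (auto simp: list_all2_Cons1)
    then have "b \<noteq> []" using False R_Nil by blast
    then show ?thesis using Cons.IH[OF AX(3)] AX False by simp
  qed
qed

lemma reinsert_length: "length (reinsert M AX) = length M"
  by (induction M arbitrary: AX) auto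

lemma cons_R:
  "list_all2 R (map (\<lambda>t. del t q) M) Bs \<Longrightarrow> \<forall>t\<in>set M. q \<in> U t \<Longrightarrow> list_all2 R M (map (Cons q) Bs)"
proof (induction M arbitrary: Bs)
  case Nil then show ?case by simp
next
  case (Cons t M)
  then obtain b Bs' where "Bs = b # Bs'" "R (del t q) b" "list_all2 R (map (\<lambda>t. del t q) M) Bs'"
    by (auto simp: list_all2_Cons1)
  then show ?case using Cons by (auto simp: R_def U_del)
qed

lemma ex_min_lin:
  fixes f :: "'a \<Rightarrow> 'b::linorder"
  shows "finite S \<Longrightarrow> S \<noteq> {} \<Longrightarrow> \<exists>x\<in>S. \<forall>y\<in>S. f x \<le> f y"
proof (induction S rule: finite_ne_induct)
  case (singleton x) then show ?case by simp
next
  case (insert x F)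
  then obtain m where m: "m \<in> F" "\<forall>y\<in>F. f m \<le> f y" by blast
  show ?case
  proof (cases "f x \<le> f m")
    case True
    have "\<forall>y\<in>insert x F. f x \<le> f y" using m True order_trans by blast
    then show ?thesis by blast
  next
    case False
    then have "f m \<le> f x" by simp
    then have "\<forall>y\<in>insert x F. f m \<le> f y" using m by blast
    then show ?thesis using m by blast
  qed
qed

lemma kof_le: "kof L q \<le> length L"
  unfolding kof_def by (rule length_takeWhile_le)

lemma kof_set: "s \<le> kof L q \<Longrightarrow> t \<in> set (take s L) \<Longrightarrow> q \<in> U t"
proof -
  assume s: "s \<le> kof L q" and t: "t \<in> set (take s L)"
  have "take s L = take s (takeWhile (\<lambda>t. q \<in> U t) L)"
    using s unfolding kof_def by (metis min.absorb1 take_take takeWhile_eq_take)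
  then show ?thesis using t by (metis in_set_takeD set_takeWhileD)
qed

lemma root_in:
  "list_all2 R (t # Ls) A \<Longrightarrow> U t \<noteq> {} \<Longrightarrow> root A \<in> U t"
proof -
  assume A: "list_all2 R (t # Ls) A" and U: "U t \<noteq> {}"
  then obtain z zs where z: "A = z # zs" "R t z" by (auto simp: list_all2_Cons1)
  then have "z \<noteq> []" using U R_Nil by blast
  then have "hd z \<in> set z" by simp
  then show ?thesis using z unfolding root_def R_def by simp
qed

lemma peel:
  assumes LA: "list_all2 R L A'" and Lt: "L = t # Ls" and path: "is_path L"
  obtains q r where "q = root A'" "q \<in> U t" "1 \<le> r" "r \<le> kof L q"
    "list_all2 R (Xof L q r) (filter (\<lambda>b. b \<noteq> []) (map tl (take r A')))"
    "list_all2 R (Yof L r) (drop r A')"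
    "Yof L r \<noteq> [] \<Longrightarrow> root (drop r A') \<noteq> q"
    "tcost phi opl L A' = opl (phi (take r L) q (tcost phi opl (Xof L q r)
        (filter (\<lambda>b. b \<noteq> []) (map tl (take r A'))))) (tcost phi opl (Yof L r) (drop r A'))"
proof -
  obtain a As where A': "A' = a # As" using LA Lt by (auto simp: list_all2_Cons1)
  define q where "q = hd a"
  define r where "r = length (takeWhile (\<lambda>b. hd b = q) A')"
  have len: "length A' = length L" using list_all2_lengthD[OF LA] by simp
  have r1: "1 \<le> r" unfolding r_def q_def A' by simp
  have rl: "r \<le> length L" unfolding r_def using len by (metis length_takeWhile_le)
  have Rn: "\<And>i. i < length L \<Longrightarrow> R (L ! i) (A' ! i)" using LA by (simp add: list_all2_conv_all_nth)
  have Une: "\<And>i. i < length L \<Longrightarrow> U (L ! i) \<noteq> {}" using path unfolding is_path_def by auto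
  have hdq: "\<And>i. i < r \<Longrightarrow> hd (A' ! i) = q"
  proof -
    fix i assume i: "i < r"
    have "takeWhile (\<lambda>b. hd b = q) A' ! i \<in> set (takeWhile (\<lambda>b. hd b = q) A')"
      using i unfolding r_def by (rule nth_mem)
    then show "hd (A' ! i) = q" using i unfolding r_def by (metis set_takeWhileD takeWhile_nth)
  qed
  have Ai: "\<And>i. i < r \<Longrightarrow> A' ! i = q # tl (A' ! i)"
  proof -
    fix i assume i: "i < r"
    have il: "i < length L" using i rl by simp
    have "A' ! i \<noteq> []" using R_Nil[OF Rn[OF il]] Une[OF il] by simp
    then show "A' ! i = q # tl (A' ! i)" using hdq[OF i] by (cases "A' ! i") auto
  qed
  have qU: "\<And>i. i < r \<Longrightarrow> q \<in> U (L ! i)"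
  proof -
    fix i assume i: "i < r"
    then have il: "i < length L" using rl by simp
    have "q \<in> set (A' ! i)" using Ai[OF i] by (metis list.set_intros(1))
    then show "q \<in> U (L ! i)" using Rn[OF il] unfolding R_def by simp
  qed
  have rk: "r \<le> kof L q" unfolding kof_def
    by (rule length_takeWhile_less_P_nth) (use qU rl in auto)
  have qt: "q \<in> U t" using qU[of 0] r1 Lt by simp
  have qroot: "q = root A'" unfolding root_def q_def A' by simp
  have X0: "list_all2 R (map (\<lambda>t. del t q) (take r L)) (map tl (take r A'))"
  proof (rule list_all2_all_nthI)
    show "length (map (\<lambda>t. del t q) (take r L)) = length (map tl (take r A'))" using len by simp
  next
    fix i assume i: "i < length (map (\<lambda>t. del t q) (take r L))"
    then have ir: "i < r" "i < length L" by auto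
    have "R (L!i) (q # tl (A' ! i))" using Rn[OF ir(2)] Ai[OF ir(1)] by simp
    then have "R (del (L ! i) q) (tl (A' ! i))" unfolding R_def U_del by auto
    then show "R (map (\<lambda>t. del t q) (take r L) ! i) (map tl (take r A') ! i)" using ir len by simp
  qed
  have X: "list_all2 R (Xof L q r) (filter (\<lambda>b. b \<noteq> []) (map tl (take r A')))"
    unfolding Xof_def by (rule filter_R[OF X0])
  have Y: "list_all2 R (Yof L r) (drop r A')" unfolding Yof_def using LA by (rule list_all2_dropI)
  have Yr: "Yof L r \<noteq> [] \<Longrightarrow> root (drop r A') \<noteq> q"
  proof -
    assume "Yof L r \<noteq> []"
    then have "r < length A'" unfolding Yof_def using len by simp
    then have "\<not> hd (A' ! r) = q" unfolding r_def by (rule nth_length_takeWhile)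
    then show "root (drop r A') \<noteq> q" unfolding root_def using \<open>r < length A'\<close>
      by (simp add: hd_drop_conv_nth)
  qed
  have T: "tcost phi opl L A' = opl (phi (take r L) q (tcost phi opl (Xof L q r)
        (filter (\<lambda>b. b \<noteq> []) (map tl (take r A'))))) (tcost phi opl (Yof L r) (drop r A'))"
    unfolding A' r_def q_def Xof_def Yof_def by (subst tcost.simps(2)) (simp only: Let_def)
  show ?thesis by (rule that[OF qroot qt r1 rk X Y Yr T])
qed

lemma cand_good:
  assumes path: "is_path L" and s1: "1 \<le> s" and sk: "s \<le> kof L q"
    and X: "list_all2 R (Xof L q s) AX" and Y: "list_all2 R (Yof L s) ay"
    and Yr: "Yof L s \<noteq> [] \<Longrightarrow> root ay \<noteq> q"
  shows "list_all2 R L (map (Cons q) (reinsert (map (\<lambda>t. del t q) (take s L)) AX) @ ay)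
    \<and> root (map (Cons q) (reinsert (map (\<lambda>t. del t q) (take s L)) AX) @ ay) = q
    \<and> tcost phi opl L (map (Cons q) (reinsert (map (\<lambda>t. del t q) (take s L)) AX) @ ay)
       = opl (phi (take s L) q (tcost phi opl (Xof L q s) AX)) (tcost phi opl (Yof L s) ay)"
proof -
  define M where "M = map (\<lambda>t. del t q) (take s L)"
  define F where "F = map (Cons q) (reinsert M AX)"
  have sl: "s \<le> length L" using sk kof_le[of L q] by linarith
  have XM: "Xof L q s = filter (\<lambda>t. U t \<noteq> {}) M" unfolding Xof_def M_def by simp
  have RM: "list_all2 R M (reinsert M AX)" and FM: "filter (\<lambda>b. b \<noteq> []) (reinsert M AX) = AX"
    using reinsert_R[of M AX] X unfolding XM by blast+
  have RF: "list_all2 R (take s L) F" unfolding F_def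
    by (rule cons_R) (use RM M_def kof_set[OF sk] in auto)
  have LA: "list_all2 R L (F @ ay)"
    using list_all2_appendI[OF RF Y[unfolded Yof_def]] by simp
  have lF: "length F = s" unfolding F_def M_def using sl by (simp add: reinsert_length)
  have hdF: "\<forall>x\<in>set F. hd x = q" unfolding F_def by auto
  have tw: "takeWhile (\<lambda>b. hd b = q) ay = []"
  proof (cases "ay = []")
    case False
    then have "Yof L s \<noteq> []" using list_all2_lengthD[OF Y] by auto
    then show ?thesis using Yr False unfolding root_def by (simp add: takeWhile_eq_Nil_iff)
  qed simp
  have tw2: "length (takeWhile (\<lambda>b. hd b = q) (F @ ay)) = s"
    using hdF tw lF by (simp add: takeWhile_append2)
  obtain f0 Fs where F0: "F = f0 # Fs" using lF s1 by (cases F) auto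
  have hf0: "hd f0 = q" using hdF F0 by simp
  have mtl: "map tl F = reinsert M AX" unfolding F_def by (simp add: comp_def)
  have "tcost phi opl L (F @ ay) = opl (phi (take s L) q (tcost phi opl (Xof L q s) AX)) (tcost phi opl (Yof L s) ay)"
  proof -
    have tw3: "length (takeWhile (\<lambda>b. hd b = q) (f0 # (Fs @ ay))) = s" using tw2 F0 by simp
    have "tcost phi opl L (F @ ay) = tcost phi opl L (f0 # (Fs @ ay))" using F0 by simp
    also have "\<dots> = opl (phi (take s L) q
               (tcost phi opl (filter (\<lambda>t. U t \<noteq> {}) (map (\<lambda>t. del t q) (take s L)))
                              (filter (\<lambda>b. b \<noteq> []) (map tl (take s (F @ ay))))))
            (tcost phi opl (drop s L) (drop s (F @ ay)))"
      apply (subst tcost.simps(2)) unfolding Let_def hf0 F0[symmetric] append_Cons[symmetric] tw2 by (rule refl)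
    also have "\<dots> = opl (phi (take s L) q (tcost phi opl (Xof L q s) AX)) (tcost phi opl (Yof L s) ay)"
      using lF mtl FM by (simp add: Xof_def Yof_def M_def)
    finally show ?thesis .
  qed
  moreover have "root (F @ ay) = q" using F0 hf0 unfolding root_def by simp
  ultimately show ?thesis using LA unfolding F_def M_def by blast
qed



definition good :: "('i cterm list \<Rightarrow> 'i \<Rightarrow> real \<Rightarrow> real) \<Rightarrow> (real \<Rightarrow> real \<Rightarrow> real)
    \<Rightarrow> 'i cterm list \<Rightarrow> 'i list list \<Rightarrow> 'i list list option \<Rightarrow> bool" where
  "good phi opl L A B \<longleftrightarrow> (is_loop_order L A \<and>
             (\<forall>A'. is_loop_order L A' \<longrightarrow> tcost phi opl L A \<le> tcost phi opl L A')) \<and>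
            (case B of
               None \<Rightarrow> \<not> (\<exists>B'. is_loop_order L B' \<and> root B' \<noteq> root A)
             | Some B0 \<Rightarrow> is_loop_order L B0 \<and> root B0 \<noteq> root A \<and>
                 (\<forall>B'. is_loop_order L B' \<and> root B' \<noteq> root A \<longrightarrow>
                    tcost phi opl L B0 \<le> tcost phi opl L B'))"

lemma tcost_nonneg_aux:
  "(\<forall>P q x. 0 \<le> x \<longrightarrow> 0 \<le> phi P q x) \<longrightarrow> (\<forall>x y. 0 \<le> x \<and> 0 \<le> y \<longrightarrow> 0 \<le> opl x y)
   \<longrightarrow> 0 \<le> tcost phi opl L A"
proof (induction phi opl L A rule: tcost.induct)
  case (1 phi opl L)
  then show ?case by simp
next
  case (2 phi opl L a As)
  define q where "q = hd a"
  define r where "r = length (takeWhile (\<lambda>b. hd b = q) (a # As))"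
  show ?case
  proof (intro impI)
    assume p: "\<forall>P q x. 0 \<le> x \<longrightarrow> 0 \<le> phi P q x" and o: "\<forall>x y. 0 \<le> x \<and> 0 \<le> y \<longrightarrow> 0 \<le> opl x y"
    have e: "tcost phi opl L (a # As) = opl (phi (take r L) q
               (tcost phi opl (filter (\<lambda>t. U t \<noteq> {}) (map (\<lambda>t. del t q) (take r L)))
                              (filter (\<lambda>b. b \<noteq> []) (map tl (take r (a # As))))))
            (tcost phi opl (drop r L) (drop r (a # As)))"
      unfolding q_def r_def by (subst tcost.simps(2)) (simp only: Let_def)
    have i1: "0 \<le> tcost phi opl (filter (\<lambda>t. U t \<noteq> {}) (map (\<lambda>t. del t q) (take r L)))
                              (filter (\<lambda>b. b \<noteq> []) (map tl (take r (a # As))))"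
      using "2.IH"(1)[OF q_def r_def] p o by blast
    have i2: "0 \<le> tcost phi opl (drop r L) (drop r (a # As))"
      using "2.IH"(2)[OF q_def r_def] p o by blast
    show "0 \<le> tcost phi opl L (a # As)" unfolding e using i1 i2 p o by blast
  qed
qed

lemma path_U: "is_path L \<Longrightarrow> t \<in> set L \<Longrightarrow> finite (U t) \<and> U t \<noteq> {}"
  unfolding is_path_def U_def by (cases t) auto

lemma path_X: "is_path L \<Longrightarrow> is_path (Xof L q s)"
  unfolding is_path_def Xof_def
  by (auto simp: del_def split: prod.splits dest!: in_set_takeD)

lemma path_Y: "is_path L \<Longrightarrow> is_path (Yof L s)"
  unfolding is_path_def Yof_def by (meson in_set_dropD)

definition mu :: "'i cterm list \<Rightarrow> nat" where
  "mu L = sum_list (map (\<lambda>t. card (U t)) L)"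

lemma mu_filter: "mu (filter (\<lambda>t. U t \<noteq> {}) xs) = mu xs"
  unfolding mu_def by (induction xs) auto

lemma mu_del: "\<forall>t\<in>set xs. q \<in> U t \<and> finite (U t) \<Longrightarrow> mu (map (\<lambda>t. del t q) xs) + length xs = mu xs"
  unfolding mu_def
proof (induction xs)
  case (Cons t xs)
  have "card (U t) \<ge> 1" using Cons.prems by (metis One_nat_def Suc_leI card_gt_0_iff empty_iff list.set_intros(1))
  then show ?case using Cons by (simp add: U_del)
qed simp

lemma mu_X:
  assumes "is_path L" "1 \<le> s" "s \<le> kof L q"
  shows "mu (Xof L q s) < mu L"
proof -
  have sl: "s \<le> length L" using assms(3) kof_le[of L q] by linarith
  have "\<forall>t\<in>set (take s L). q \<in> U t \<and> finite (U t)"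
    using kof_set[OF assms(3)] path_U[OF assms(1)] by (meson in_set_takeD)
  then have "mu (map (\<lambda>t. del t q) (take s L)) + s = mu (take s L)"
    using mu_del[of "take s L" q] sl by simp
  moreover have "mu L = mu (take s L) + mu (drop s L)"
    unfolding mu_def by (metis append_take_drop_id map_append sum_list_append)
  ultimately show ?thesis unfolding Xof_def mu_filter using assms(2) by linarith
qed

lemma mu_Y:
  assumes "is_path L" "1 \<le> s" "s \<le> length L"
  shows "mu (Yof L s) < mu L"
proof -
  obtain t Ls where L: "L = t # Ls" using assms by (cases L) auto
  have "finite (U t) \<and> U t \<noteq> {}" using path_U[OF assms(1)] L by simp
  then have c: "card (U t) > 0" by (simp add: card_gt_0_iff)
  have "take s L = t # take (s - 1) Ls" using L assms(2) by (cases s) auto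
  then have "mu (take s L) > 0" using c unfolding mu_def by simp
  moreover have "mu L = mu (take s L) + mu (drop s L)"
    unfolding mu_def by (metis append_take_drop_id map_append sum_list_append)
  ultimately show ?thesis unfolding Yof_def by simp
qed

lemma ORDER_Nil_inv: "ORDER phi opl [] A B \<Longrightarrow> A = [] \<and> B = None"
  by (cases rule: ORDER.cases) auto

lemma dval_None: "dval phi opl L q s AX None = \<infinity>"
  unfolding dval_def by simp

lemma dval_Some: "dval phi opl L q s AX (Some ay) = ennreal (opl (phi (take s L) q (tcost phi opl (Xof L q s) AX))
                                (tcost phi opl (Yof L s) ay))"
  unfolding dval_def by simp



locale costs =
  fixes phi :: "'i cterm list \<Rightarrow> 'i \<Rightarrow> real \<Rightarrow> real"
    and opl :: "real \<Rightarrow> real \<Rightarrow> real"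
  assumes phi_nonneg: "\<forall>P q x. 0 \<le> x \<longrightarrow> 0 \<le> phi P q x"
    and phi_mono: "\<forall>P q x y. 0 \<le> x \<and> x \<le> y \<longrightarrow> phi P q x \<le> phi P q y"
    and opl_nonneg: "\<forall>x y. 0 \<le> x \<and> 0 \<le> y \<longrightarrow> 0 \<le> opl x y"
    and opl_mono: "\<forall>x x' y y'. 0 \<le> x \<and> x \<le> x' \<and> 0 \<le> y \<and> y \<le> y' \<longrightarrow> opl x y \<le> opl x' y'"
begin

lemma tcost_nonneg: "0 \<le> tcost phi opl L A"
  using tcost_nonneg_aux phi_nonneg opl_nonneg by blast

lemma mono_step:
  assumes "tcost phi opl X ax \<le> tcost phi opl X ax'" "tcost phi opl Y ay \<le> tcost phi opl Y ay'"
  shows "opl (phi P q (tcost phi opl X ax)) (tcost phi opl Y ay)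
       \<le> opl (phi P q (tcost phi opl X ax')) (tcost phi opl Y ay')"
proof -
  have "phi P q (tcost phi opl X ax) \<le> phi P q (tcost phi opl X ax')"
    using phi_mono assms(1) tcost_nonneg by blast
  moreover have "0 \<le> phi P q (tcost phi opl X ax)" using phi_nonneg tcost_nonneg by blast
  ultimately show ?thesis using opl_mono assms(2) tcost_nonneg by blast
qed

lemma lower_bound:
  assumes path: "is_path L" and Lt: "L = t # Ls"
    and IH: "\<forall>q s. q \<in> U t \<and> 1 \<le> s \<and> s \<le> kof L q \<longrightarrow>
              good phi opl (Xof L q s) (AX q s) (BX q s) \<and> good phi opl (Yof L s) (AbY q s) (BbY q s)"
    and A': "is_loop_order L A'"
  shows "\<exists>r. root A' \<in> U t \<and> 1 \<le> r \<and> r \<le> kof L (root A') \<and>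
     dval phi opl L (root A') r (AX (root A') r) (adjY (root A') (Yof L r) (AbY (root A') r) (BbY (root A') r))
       \<le> ennreal (tcost phi opl L A')"
proof -
  have LA: "list_all2 R L A'" using A' lo_iff by blast
  obtain q r where q: "q = root A'" "q \<in> U t" "1 \<le> r" "r \<le> kof L q"
    and X: "list_all2 R (Xof L q r) (filter (\<lambda>b. b \<noteq> []) (map tl (take r A')))"
    and Y: "list_all2 R (Yof L r) (drop r A')"
    and Yr: "Yof L r \<noteq> [] \<Longrightarrow> root (drop r A') \<noteq> q"
    and T: "tcost phi opl L A' = opl (phi (take r L) q (tcost phi opl (Xof L q r)
        (filter (\<lambda>b. b \<noteq> []) (map tl (take r A'))))) (tcost phi opl (Yof L r) (drop r A'))"
    using peel[OF LA Lt path] by metis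
  have gX: "good phi opl (Xof L q r) (AX q r) (BX q r)" and gY: "good phi opl (Yof L r) (AbY q r) (BbY q r)"
    using IH q by blast+
  have cX: "tcost phi opl (Xof L q r) (AX q r) \<le> tcost phi opl (Xof L q r) (filter (\<lambda>b. b \<noteq> []) (map tl (take r A')))"
    using gX X unfolding good_def lo_iff by blast
  obtain ay where ay: "adjY q (Yof L r) (AbY q r) (BbY q r) = Some ay"
    "tcost phi opl (Yof L r) ay \<le> tcost phi opl (Yof L r) (drop r A')"
  proof (cases "Yof L r \<noteq> [] \<and> root (AbY q r) = q")
    case True
    then have e: "adjY q (Yof L r) (AbY q r) (BbY q r) = BbY q r" unfolding adjY_def by simp
    show ?thesis
    proof (cases "BbY q r")
      case None
      then show ?thesis using gY Y Yr True unfolding good_def lo_iff by auto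
    next
      case (Some B0)
      have c: "tcost phi opl (Yof L r) B0 \<le> tcost phi opl (Yof L r) (drop r A')"
        using Some gY Y Yr True unfolding good_def lo_iff by auto
      show ?thesis by (rule that[of B0, OF trans[OF e Some] c])
    qed
  next
    case False
    then have e: "adjY q (Yof L r) (AbY q r) (BbY q r) = Some (AbY q r)" unfolding adjY_def by (rule if_not_P)
    have "tcost phi opl (Yof L r) (AbY q r) \<le> tcost phi opl (Yof L r) (drop r A')"
      using gY Y unfolding good_def lo_iff by blast
    then show ?thesis using that e by blast
  qed
  have "dval phi opl L q r (AX q r) (adjY q (Yof L r) (AbY q r) (BbY q r)) \<le> ennreal (tcost phi opl L A')"
    unfolding ay(1) dval_Some T by (rule ennreal_leI, rule mono_step[OF cX ay(2)])
  then show ?thesis using q by blast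
qed

lemma exact:
  assumes path: "is_path L" and s: "1 \<le> s" "s \<le> kof L q"
    and gX: "good phi opl (Xof L q s) ax bx" and gY: "good phi opl (Yof L s) aby bby"
    and ay: "adjY q (Yof L s) aby bby = Some ay"
    and C: "cand L q s ax (Some ay) = Some C"
  shows "is_loop_order L C \<and> root C = q \<and> ennreal (tcost phi opl L C) = dval phi opl L q s ax (Some ay)"
proof -
  have X: "list_all2 R (Xof L q s) ax" using gX unfolding good_def lo_iff by blast
  have Y: "list_all2 R (Yof L s) ay \<and> (Yof L s \<noteq> [] \<longrightarrow> root ay \<noteq> q)"
  proof (cases "Yof L s \<noteq> [] \<and> root aby = q")
    case True
    then have "bby = Some ay" using ay unfolding adjY_def by simp
    then show ?thesis using gY True unfolding good_def lo_iff by auto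
  next
    case False
    then have "adjY q (Yof L s) aby bby = Some aby" unfolding adjY_def by (rule if_not_P)
    then have "aby = ay" using ay by simp
    then show ?thesis using gY False unfolding good_def lo_iff by auto
  qed
  have CC: "C = map (Cons q) (reinsert (map (\<lambda>t. del t q) (take s L)) ax) @ ay"
    using C unfolding cand_def by simp
  show ?thesis using cand_good[OF path s X, of ay phi opl] Y unfolding CC lo_iff dval_Some by simp
qed

lemma ORDER_correct: "ORDER phi opl L A B \<Longrightarrow> is_path L \<longrightarrow> good phi opl L A B"
proof (induction rule: ORDER.induct)
  case ORDER_Nil
  show ?case unfolding good_def lo_iff by auto
next
  case (ORDER_Cons L t Ls AX BX AbY BbY sq qs A B)
  show ?case
  proof
    assume path: "is_path L"
    define D where "D q s = dval phi opl L q s (AX q s) (adjY q (Yof L s) (AbY q s) (BbY q s))" for q s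
    have IH: "\<forall>q s. q \<in> U t \<and> 1 \<le> s \<and> s \<le> kof L q \<longrightarrow>
              good phi opl (Xof L q s) (AX q s) (BX q s) \<and> good phi opl (Yof L s) (AbY q s) (BbY q s)"
    proof (intro allI impI)
      fix q s assume c: "q \<in> U t \<and> 1 \<le> s \<and> s \<le> kof L q"
      note h = ORDER_Cons.IH[rule_format, OF c]
      have h1: "is_path (Xof L q s) \<longrightarrow> good phi opl (Xof L q s) (AX q s) (BX q s)" using h by (elim conjE)
      have h2: "is_path (Yof L s) \<longrightarrow> good phi opl (Yof L s) (AbY q s) (BbY q s)" using h by (elim conjE)
      show "good phi opl (Xof L q s) (AX q s) (BX q s) \<and> good phi opl (Yof L s) (AbY q s) (BbY q s)"
        using mp[OF h1 path_X[OF path]] mp[OF h2 path_Y[OF path]] by (rule conjI)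
    qed
    have sqm: "\<forall>q\<in>U t. 1 \<le> sq q \<and> sq q \<le> kof L q \<and> (\<forall>s. 1 \<le> s \<and> s \<le> kof L q \<longrightarrow> D q (sq q) \<le> D q s)"
      using ORDER_Cons(2) unfolding D_def .
    have qsm: "\<forall>q\<in>U t. D qs (sq qs) \<le> D q (sq q)" using ORDER_Cons(4) unfolding D_def .
    have qs: "qs \<in> U t" by (rule ORDER_Cons(3))
    have Lt: "L = t # Ls" by (rule ORDER_Cons(1))
    have lb: "\<And>A'. is_loop_order L A' \<Longrightarrow> root A' \<in> U t \<and> D (root A') (sq (root A')) \<le> ennreal (tcost phi opl L A')"
    proof -
      fix A' assume A': "is_loop_order L A'"
      obtain r where r: "root A' \<in> U t" "1 \<le> r" "r \<le> kof L (root A')"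
        "D (root A') r \<le> ennreal (tcost phi opl L A')"
        using lower_bound[OF path Lt IH A'] unfolding D_def by blast
      have "D (root A') (sq (root A')) \<le> D (root A') r" using sqm r by blast
      then show "root A' \<in> U t \<and> D (root A') (sq (root A')) \<le> ennreal (tcost phi opl L A')"
        using r order_trans by blast
    qed
    have exq: "\<And>q C. q \<in> U t \<Longrightarrow> cand L q (sq q) (AX q (sq q)) (adjY q (Yof L (sq q)) (AbY q (sq q)) (BbY q (sq q))) = Some C
       \<Longrightarrow> is_loop_order L C \<and> root C = q \<and> ennreal (tcost phi opl L C) = D q (sq q)"
    proof -
      fix q C assume q: "q \<in> U t" and C: "cand L q (sq q) (AX q (sq q)) (adjY q (Yof L (sq q)) (AbY q (sq q)) (BbY q (sq q))) = Some C"
      obtain ay where ay: "adjY q (Yof L (sq q)) (AbY q (sq q)) (BbY q (sq q)) = Some ay"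
        using C unfolding cand_def by (cases "adjY q (Yof L (sq q)) (AbY q (sq q)) (BbY q (sq q))") auto
      have s: "1 \<le> sq q" "sq q \<le> kof L q" using sqm q by auto
      have g: "good phi opl (Xof L q (sq q)) (AX q (sq q)) (BX q (sq q))"
              "good phi opl (Yof L (sq q)) (AbY q (sq q)) (BbY q (sq q))" using IH q s by blast+
      show "is_loop_order L C \<and> root C = q \<and> ennreal (tcost phi opl L C) = D q (sq q)"
        using exact[OF path s g ay] C unfolding ay D_def by simp
    qed
    have A: "is_loop_order L A \<and> root A = qs \<and> ennreal (tcost phi opl L A) = D qs (sq qs)"
      using exq[OF qs ORDER_Cons(5)] .
    have optA: "\<forall>A'. is_loop_order L A' \<longrightarrow> tcost phi opl L A \<le> tcost phi opl L A'"
    proof (intro allI impI)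
      fix A' assume A': "is_loop_order L A'"
      have "ennreal (tcost phi opl L A) \<le> ennreal (tcost phi opl L A')"
        using A lb[OF A'] qsm order_trans by metis
      then show "tcost phi opl L A \<le> tcost phi opl L A'" using tcost_nonneg by simp
    qed
    have Bpart: "case B of
               None \<Rightarrow> \<not> (\<exists>B'. is_loop_order L B' \<and> root B' \<noteq> root A)
             | Some B0 \<Rightarrow> is_loop_order L B0 \<and> root B0 \<noteq> root A \<and>
                 (\<forall>B'. is_loop_order L B' \<and> root B' \<noteq> root A \<longrightarrow>
                    tcost phi opl L B0 \<le> tcost phi opl L B')"
      using ORDER_Cons(6)
    proof
      assume "U t = {qs} \<and> B = None"
      then show ?thesis using lb A by auto
    next
      assume "\<exists>q'. q' \<in> U t \<and> q' \<noteq> qs \<and>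
        (\<forall>q\<in>U t - {qs}.
          dval phi opl L q' (sq q') (AX q' (sq q')) (adjY q' (Yof L (sq q')) (AbY q' (sq q')) (BbY q' (sq q')))
          \<le> dval phi opl L q (sq q) (AX q (sq q)) (adjY q (Yof L (sq q)) (AbY q (sq q)) (BbY q (sq q)))) \<and>
        B = cand L q' (sq q') (AX q' (sq q')) (adjY q' (Yof L (sq q')) (AbY q' (sq q')) (BbY q' (sq q')))"
      then obtain q' where q': "q' \<in> U t" "q' \<noteq> qs" "\<forall>q\<in>U t - {qs}. D q' (sq q') \<le> D q (sq q)"
        and B: "B = cand L q' (sq q') (AX q' (sq q')) (adjY q' (Yof L (sq q')) (AbY q' (sq q')) (BbY q' (sq q')))"
        unfolding D_def by blast
      have lbB: "\<And>B'. is_loop_order L B' \<Longrightarrow> root B' \<noteq> root A \<Longrightarrow> D q' (sq q') \<le> ennreal (tcost phi opl L B')"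
      proof -
        fix B' assume B': "is_loop_order L B'" "root B' \<noteq> root A"
        have "root B' \<in> U t - {qs}" using lb[OF B'(1)] B'(2) A by auto
        then show "D q' (sq q') \<le> ennreal (tcost phi opl L B')" using q'(3) lb[OF B'(1)] order_trans by blast
      qed
      show ?thesis
      proof (cases B)
        case None
        then have "D q' (sq q') = \<infinity>" using B unfolding D_def cand_def
          by (cases "adjY q' (Yof L (sq q')) (AbY q' (sq q')) (BbY q' (sq q'))") (auto simp: dval_None)
        have nx: "\<not> (\<exists>B'. is_loop_order L B' \<and> root B' \<noteq> root A)"
        proof
          assume "\<exists>B'. is_loop_order L B' \<and> root B' \<noteq> root A"
          then obtain B' where B': "is_loop_order L B'" "root B' \<noteq> root A" by blast
          have "\<infinity> \<le> ennreal (tcost phi opl L B')" using lbB[OF B'] \<open>D q' (sq q') = \<infinity>\<close> by simp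
          then show False by (simp add: infinity_ennreal_def top_unique)
        qed
        show ?thesis unfolding None option.case by (rule nx)
      next
        case (Some B0)
        have e: "is_loop_order L B0 \<and> root B0 = q' \<and> ennreal (tcost phi opl L B0) = D q' (sq q')"
          using exq[OF q'(1)] B Some by simp
        have "\<forall>B'. is_loop_order L B' \<and> root B' \<noteq> root A \<longrightarrow> tcost phi opl L B0 \<le> tcost phi opl L B'"
        proof (intro allI impI)
          fix B' assume B': "is_loop_order L B' \<and> root B' \<noteq> root A"
          have "ennreal (tcost phi opl L B0) \<le> ennreal (tcost phi opl L B')" using e lbB B' by metis
          then show "tcost phi opl L B0 \<le> tcost phi opl L B'" using tcost_nonneg by simp
        qed
        then show ?thesis using Some e A q'(2) by simp
      qed
    qed
    show "good phi opl L A B" unfolding good_def using A optA Bpart by blast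
  qed
qed


lemma ORDER_exists: "is_path L \<Longrightarrow> \<exists>A B. ORDER phi opl L A B"
proof (induction "mu L" arbitrary: L rule: less_induct)
  case less
  note path = less.prems
  show ?case
  proof (cases L)
    case Nil then show ?thesis using ORDER_Nil by blast
  next
    case (Cons t Ls)
    have ex: "(\<exists>a b. ORDER phi opl (Xof L q s) a b) \<and> (\<exists>a b. ORDER phi opl (Yof L s) a b)"
      if c: "q \<in> U t \<and> 1 \<le> s \<and> s \<le> kof L q" for q s
    proof -
      have sl: "s \<le> length L" using c kof_le[of L q] by linarith
      show ?thesis
        using less.hyps[OF mu_X[OF path, of s q] path_X[OF path]]
              less.hyps[OF mu_Y[OF path _ sl] path_Y[OF path]] c by blast
    qed
    define PX where "PX q s = (SOME p. ORDER phi opl (Xof L q s) (fst p) (snd p))" for q s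
    define PY where "PY s = (SOME p. ORDER phi opl (Yof L s) (fst p) (snd p))" for s
    define AX where "AX q s = fst (PX q s)" for q s
    define BX where "BX q s = snd (PX q s)" for q s
    define AbY where "AbY (q::'i) s = fst (PY s)" for q s
    define BbY where "BbY (q::'i) s = snd (PY s)" for q s
    have ord: "ORDER phi opl (Xof L q s) (AX q s) (BX q s) \<and> ORDER phi opl (Yof L s) (AbY q s) (BbY q s)"
      if c: "q \<in> U t \<and> 1 \<le> s \<and> s \<le> kof L q" for q s
    proof -
      obtain a b a' b' where "ORDER phi opl (Xof L q s) a b" "ORDER phi opl (Yof L s) a' b'"
        using ex[OF c] by blast
      then have e1: "\<exists>p. ORDER phi opl (Xof L q s) (fst p) (snd p)"
        and e2: "\<exists>p. ORDER phi opl (Yof L s) (fst p) (snd p)" by auto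
      show ?thesis unfolding AX_def BX_def AbY_def BbY_def PX_def PY_def
        using someI_ex[OF e1] someI_ex[OF e2] by blast
    qed
    have gd: "good phi opl (Xof L q s) (AX q s) (BX q s) \<and> good phi opl (Yof L s) (AbY q s) (BbY q s)"
      if c: "q \<in> U t \<and> 1 \<le> s \<and> s \<le> kof L q" for q s
      using ORDER_correct ord[OF c] path_X[OF path] path_Y[OF path] by blast
    define D where "D q s = dval phi opl L q s (AX q s) (adjY q (Yof L s) (AbY q s) (BbY q s))" for q s
    have k1: "1 \<le> kof L q" if "q \<in> U t" for q unfolding kof_def Cons using that by simp
    have "\<forall>q\<in>U t. \<exists>s\<in>{1..kof L q}. \<forall>s'\<in>{1..kof L q}. D q s \<le> D q s'"
    proof
      fix q assume "q \<in> U t"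
      then have "{1..kof L q} \<noteq> {}" using k1 by simp
      then show "\<exists>s\<in>{1..kof L q}. \<forall>s'\<in>{1..kof L q}. D q s \<le> D q s'"
        using ex_min_lin[of "{1..kof L q}" "D q"] by simp
    qed
    then obtain sq where sq: "\<forall>q\<in>U t. sq q \<in> {1..kof L q} \<and> (\<forall>s'\<in>{1..kof L q}. D q (sq q) \<le> D q s')"
      by metis
    have fU: "finite (U t)" "U t \<noteq> {}" using path_U[OF path] Cons by auto
    obtain qs where qs: "qs \<in> U t" "\<forall>q\<in>U t. D qs (sq qs) \<le> D q (sq q)"
      using ex_min_lin[OF fU, of "\<lambda>q. D q (sq q)"] by blast
    obtain q0 where q0: "q0 \<in> U t" using fU by blast
    define s0 where "s0 = kof L q0"
    have s0: "q0 \<in> U t \<and> 1 \<le> s0 \<and> s0 \<le> kof L q0" using q0 k1 unfolding s0_def by simp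
    have adj0: "adjY q0 (Yof L s0) (AbY q0 s0) (BbY q0 s0) = Some (AbY q0 s0)"
    proof (cases "Yof L s0 = []")
      case True then show ?thesis unfolding adjY_def by simp
    next
      case False
      then have sl: "s0 < length L" unfolding Yof_def by simp
      then have nq: "q0 \<notin> U (L ! s0)" unfolding s0_def kof_def using nth_length_takeWhile
        by (metis kof_def length_takeWhile_le s0_def)
      have Ydec: "Yof L s0 = L ! s0 # drop (Suc s0) L" unfolding Yof_def using sl by (rule Cons_nth_drop_Suc[symmetric])
      have "is_loop_order (Yof L s0) (AbY q0 s0)" using gd[OF s0] unfolding good_def by blast
      then have "list_all2 R (L ! s0 # drop (Suc s0) L) (AbY q0 s0)" using Ydec lo_iff by metis
      moreover have "U (L ! s0) \<noteq> {}" using path_U[OF path] sl by simp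
      ultimately have rr: "root (AbY q0 s0) \<in> U (L ! s0)" by (rule root_in)
      have "root (AbY q0 s0) \<noteq> q0"
      proof
        assume "root (AbY q0 s0) = q0"
        then show False using rr nq by simp
      qed
      then show ?thesis unfolding adjY_def by simp
    qed
    have D0: "D q0 s0 \<noteq> \<infinity>" unfolding D_def adj0 dval_Some by (simp add: infinity_ennreal_def)
    have "D q0 (sq q0) \<le> D q0 s0" using sq q0 s0 by auto
    then have "D qs (sq qs) \<le> D q0 s0" using qs q0 order_trans by blast
    then have Dqs: "D qs (sq qs) \<noteq> \<infinity>" using D0 by (auto simp: infinity_ennreal_def top_unique)
    obtain ay where ay: "adjY qs (Yof L (sq qs)) (AbY qs (sq qs)) (BbY qs (sq qs)) = Some ay"
      using Dqs unfolding D_def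
      by (cases "adjY qs (Yof L (sq qs)) (AbY qs (sq qs)) (BbY qs (sq qs))") (auto simp: dval_None)
    obtain A where A: "cand L qs (sq qs) (AX qs (sq qs)) (adjY qs (Yof L (sq qs)) (AbY qs (sq qs)) (BbY qs (sq qs))) = Some A"
      unfolding ay cand_def by simp
    have P2: "\<forall>q s. q \<in> U t \<and> 1 \<le> s \<and> s \<le> kof L q \<longrightarrow>
        ORDER phi opl (Xof L q s) (AX q s) (BX q s) \<and>
        ORDER phi opl (Yof L s) (AbY q s) (BbY q s)" using ord by blast
    have P3: "\<forall>q\<in>U t. 1 \<le> sq q \<and> sq q \<le> kof L q \<and>
        (\<forall>s. 1 \<le> s \<and> s \<le> kof L q \<longrightarrow>
           dval phi opl L q (sq q) (AX q (sq q)) (adjY q (Yof L (sq q)) (AbY q (sq q)) (BbY q (sq q)))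
           \<le> dval phi opl L q s (AX q s) (adjY q (Yof L s) (AbY q s) (BbY q s)))"
      unfolding D_def[symmetric] using sq by auto
    have P5: "\<forall>q\<in>U t.
        dval phi opl L qs (sq qs) (AX qs (sq qs)) (adjY qs (Yof L (sq qs)) (AbY qs (sq qs)) (BbY qs (sq qs)))
        \<le> dval phi opl L q (sq q) (AX q (sq q)) (adjY q (Yof L (sq q)) (AbY q (sq q)) (BbY q (sq q)))"
      unfolding D_def[symmetric] using qs by blast
    show ?thesis
    proof (cases "U t = {qs}")
      case True
      have "ORDER phi opl L A None"
        by (rule ORDER_Cons[OF Cons P2 P3 qs(1) P5 A]) (use True in blast)
      then show ?thesis by blast
    next
      case False
      have fU': "finite (U t - {qs})" "U t - {qs} \<noteq> {}" using fU False qs(1) by auto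
      obtain q' where q': "q' \<in> U t - {qs}" "\<forall>q\<in>U t - {qs}. D q' (sq q') \<le> D q (sq q)"
        using ex_min_lin[OF fU', of "\<lambda>q. D q (sq q)"] by blast
      have "ORDER phi opl L A (cand L q' (sq q') (AX q' (sq q')) (adjY q' (Yof L (sq q')) (AbY q' (sq q')) (BbY q' (sq q'))))"
      proof (rule ORDER_Cons[OF Cons P2 P3 qs(1) P5 A], rule disjI2, rule exI[of _ q'], intro conjI)
        show "q' \<in> U t" "q' \<noteq> qs" using q'(1) by auto
        show "\<forall>q\<in>U t - {qs}.
          dval phi opl L q' (sq q') (AX q' (sq q')) (adjY q' (Yof L (sq q')) (AbY q' (sq q')) (BbY q' (sq q')))
          \<le> dval phi opl L q (sq q) (AX q (sq q)) (adjY q (Yof L (sq q)) (AbY q (sq q)) (BbY q (sq q)))"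
          using q'(2) unfolding D_def .
      qed simp
      then show ?thesis by blast
    qed
  qed
qed

end


theorem mainTheorem1:
  fixes phi :: "'i cterm list \<Rightarrow> 'i \<Rightarrow> real \<Rightarrow> real"
    and opl :: "real \<Rightarrow> real \<Rightarrow> real"
    and L :: "'i cterm list"
  assumes path: "is_path L"
    and phi_nonneg: "\<forall>P q x. 0 \<le> x \<longrightarrow> 0 \<le> phi P q x"
    and phi_mono: "\<forall>P q x y. 0 \<le> x \<and> x \<le> y \<longrightarrow> phi P q x \<le> phi P q y"
    and opl_nonneg: "\<forall>x y. 0 \<le> x \<and> 0 \<le> y \<longrightarrow> 0 \<le> opl x y"
    and opl_assoc: "\<forall>x y z. 0 \<le> x \<and> 0 \<le> y \<and> 0 \<le> z \<longrightarrow> opl (opl x y) z = opl x (opl y z)"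
    and opl_mono: "\<forall>x x' y y'. 0 \<le> x \<and> x \<le> x' \<and> 0 \<le> y \<and> y \<le> y' \<longrightarrow> opl x y \<le> opl x' y'"
    and opl_zero: "\<forall>x. 0 \<le> x \<longrightarrow> opl 0 x = x \<and> opl x 0 = x"
  shows "(\<exists>A B. ORDER phi opl L A B) \<and>
         (\<forall>A B. ORDER phi opl L A B \<longrightarrow>
            (is_loop_order L A \<and>
             (\<forall>A'. is_loop_order L A' \<longrightarrow> tcost phi opl L A \<le> tcost phi opl L A')) \<and>
            (case B of
               None \<Rightarrow> \<not> (\<exists>B'. is_loop_order L B' \<and> root B' \<noteq> root A)
             | Some B0 \<Rightarrow> is_loop_order L B0 \<and> root B0 \<noteq> root A \<and>
                 (\<forall>B'. is_loop_order L B' \<and> root B' \<noteq> root A \<longrightarrow>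
                    tcost phi opl L B0 \<le> tcost phi opl L B')))"
proof -
  have c: "costs phi opl" unfolding costs_def using phi_nonneg phi_mono opl_nonneg opl_mono by blast
  have ex: "\<exists>A B. ORDER phi opl L A B" by (rule costs.ORDER_exists[OF c path])
  have all: "\<forall>A B. ORDER phi opl L A B \<longrightarrow> good phi opl L A B"
    using costs.ORDER_correct[OF c] path by blast
  show ?thesis using ex all unfolding good_def by blast
qed

end
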